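(* Let $\mathbf{A}$ be a countable UL-chain and let $\mathscr{K}_2$ be the class of all finite $\mathbf{A}$-structures $\langle\mathbf{A},\mathbf{M}\rangle$ in the language with a single binary relation symbol $<$ such that for all $a,b,c\in M$: $\|a<a\|^{\mathbf{A}}_{\mathbf{M}}\ge\bar 1$; $\|(a<b\wedge b<c)\to a<c\|^{\mathbf{A}}_{\mathbf{M}}\ge\bar 1$; and $\|a<b\vee b<a\|^{\mathbf{A}}_{\mathbf{M}}\ge\bar 1$. Then $\mathscr{K}_2^{\cong}$ is a Fraïssé class, i.e. a countable set of finitely generated $\mathbf{A}$-structures having the hereditary property, the joint embedding property and the amalgamation property.
   Context: A UL-algebra is $\mathbf{A}=\langle A,\wedge,\vee,\&,\to,\bar 0,\bar 1,\bot,\top\rangle$ where $\langle A,\wedge,\vee,\bot,\top\rangle$ is a bounded lattice, $\langle A,\&,\bar 1\rangle$ is a commutative monoid, $a\& b\le c$ iff $b\le a\to c$, and $((a\to b)\wedge\bar 1)\vee((b\to a)\wedge \bar 1)=\bar 1$; a UL-chain is one with linear order. An $\mathbf{A}$-structure for $\{<\}$ is a set $M$ with a function $<_{\mathbf{M}}:M^2\to A$, $\|a<b\|^{\mathbf{A}}_{\mathbf{M}}=<_{\mathbf{M}}(a,b)$, compound formulas evaluated by the operations of $\mathbf{A}$. Substructure: subset with restricted relation. Embedding: injective map preserving the values of $<$, identity on $\mathbf{A}$; isomorphism: surjective embedding. $\mathscr{K}^{\cong}$: one representative of each isomorphism type in $\mathscr{K}$. Hereditary property: closed under substructures (up to isomorphism).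 Joint embedding property: any two members embed into a common member. Amalgamation property: whenever $\mathbf{M}_0$ is a substructure of both $\mathbf{M}_1$ and $\mathbf{M}_2$, all in the class, there are a member $\mathbf{M}_3$ and embeddings $f_1:\mathbf{M}_1\to\mathbf{M}_3$, $f_2:\mathbf{M}_2\to\mathbf{M}_3$ agreeing on $M_0$. *)

theory Defs
  imports Main "HOL-Library.Countable_Set"
begin

record 'a ul_alg =
  ucar  :: "'a set"
  umeet :: "'a \<Rightarrow> 'a \<Rightarrow> 'a"
  ujoin :: "'a \<Rightarrow> 'a \<Rightarrow> 'a"
  ufus  :: "'a \<Rightarrow> 'a \<Rightarrow> 'a"
  uimp  :: "'a \<Rightarrow> 'a \<Rightarrow> 'a"
  uzero :: 'a
  uone  :: 'a
  ubot  :: 'a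
  utop  :: 'a

definition ul_le :: "('a, 'm) ul_alg_scheme \<Rightarrow> 'a \<Rightarrow> 'a \<Rightarrow> bool" where
  "ul_le A a b \<longleftrightarrow> umeet A a b = a"

definition ul_algebra :: "('a, 'm) ul_alg_scheme \<Rightarrow> bool" where
  "ul_algebra A \<longleftrightarrow>
     uzero A \<in> ucar A \<and> uone A \<in> ucar A \<and> ubot A \<in> ucar A \<and> utop A \<in> ucar A \<and>
     (\<forall>a\<in>ucar A. \<forall>b\<in>ucar A.
        umeet A a b \<in> ucar A \<and> ujoin A a b \<in> ucar A \<and>
        ufus A a b \<in> ucar A \<and> uimp A a b \<in> ucar A) \<and>
     \<comment> \<open>bounded lattice\<close>
     (\<forall>a\<in>ucar A. \<forall>b\<in>ucar A.
        umeet A a b = umeet A b a \<and> ujoin A a b = ujoin A b a \<and>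
        umeet A a (ujoin A a b) = a \<and> ujoin A a (umeet A a b) = a) \<and>
     (\<forall>a\<in>ucar A. \<forall>b\<in>ucar A. \<forall>c\<in>ucar A.
        umeet A (umeet A a b) c = umeet A a (umeet A b c) \<and>
        ujoin A (ujoin A a b) c = ujoin A a (ujoin A b c)) \<and>
     (\<forall>a\<in>ucar A. ul_le A (ubot A) a \<and> ul_le A a (utop A)) \<and>
     \<comment> \<open>commutative monoid\<close>
     (\<forall>a\<in>ucar A. \<forall>b\<in>ucar A. \<forall>c\<in>ucar A.
        ufus A (ufus A a b) c = ufus A a (ufus A b c)) \<and>
     (\<forall>a\<in>ucar A. \<forall>b\<in>ucar A. ufus A a b = ufus A b a) \<and>
     (\<forall>a\<in>ucar A. ufus A a (uone A) = a) \<and>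
     \<comment> \<open>residuation\<close>
     (\<forall>a\<in>ucar A. \<forall>b\<in>ucar A. \<forall>c\<in>ucar A.
        ul_le A (ufus A a b) c \<longleftrightarrow> ul_le A b (uimp A a c)) \<and>
     \<comment> \<open>prelinearity\<close>
     (\<forall>a\<in>ucar A. \<forall>b\<in>ucar A.
        ujoin A (umeet A (uimp A a b) (uone A)) (umeet A (uimp A b a) (uone A)) = uone A)"

definition ul_chain :: "('a, 'm) ul_alg_scheme \<Rightarrow> bool" where
  "ul_chain A \<longleftrightarrow> ul_algebra A \<and>
     (\<forall>a\<in>ucar A. \<forall>b\<in>ucar A. ul_le A a b \<or> ul_le A b a)"

text \<open>An A-structure is a pair (M, R): universe M and the interpretation R of <.
  Only the values of R on M matter.\<close>
type_synonym ('b, 'a) astr = "'b set \<times> ('b \<Rightarrow> 'b \<Rightarrow> 'a)"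

definition is_astr :: "('a, 'm) ul_alg_scheme \<Rightarrow> ('b, 'a) astr \<Rightarrow> bool" where
  "is_astr A S \<longleftrightarrow> (\<forall>x\<in>fst S. \<forall>y\<in>fst S. snd S x y \<in> ucar A)"

definition substr :: "('b, 'a) astr \<Rightarrow> ('b, 'a) astr \<Rightarrow> bool" where
  "substr N M \<longleftrightarrow> fst N \<subseteq> fst M \<and>
     (\<forall>x\<in>fst N. \<forall>y\<in>fst N. snd N x y = snd M x y)"

definition embedding :: "('b \<Rightarrow> 'c) \<Rightarrow> ('b, 'a) astr \<Rightarrow> ('c, 'a) astr \<Rightarrow> bool" where
  "embedding f N M \<longleftrightarrow> f ` fst N \<subseteq> fst M \<and> inj_on f (fst N) \<and>
     (\<forall>x\<in>fst N. \<forall>y\<in>fst N. snd M (f x) (f y) = snd N x y)"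

definition isomorphism :: "('b \<Rightarrow> 'c) \<Rightarrow> ('b, 'a) astr \<Rightarrow> ('c, 'a) astr \<Rightarrow> bool" where
  "isomorphism f N M \<longleftrightarrow> embedding f N M \<and> f ` fst N = fst M"

definition isomorphic :: "('b, 'a) astr \<Rightarrow> ('c, 'a) astr \<Rightarrow> bool" where
  "isomorphic N M \<longleftrightarrow> (\<exists>f. isomorphism f N M)"

definition K2 :: "('a, 'm) ul_alg_scheme \<Rightarrow> ('b, 'a) astr set" where
  "K2 A = {S. finite (fst S) \<and> is_astr A S \<and>
     (\<forall>a\<in>fst S. \<forall>b\<in>fst S. \<forall>c\<in>fst S.
        ul_le A (uone A) (snd S a a) \<and>
        ul_le A (uone A) (uimp A (umeet A (snd S a b) (snd S b c)) (snd S a c)) \<and>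
        ul_le A (uone A) (ujoin A (snd S a b) (snd S b a)))}"

text \<open>S is a set of representatives K^\<cong> of the class K: one member of K for each
  isomorphism type of K.\<close>
definition iso_reps :: "('b, 'a) astr set \<Rightarrow> ('b, 'a) astr set \<Rightarrow> bool" where
  "iso_reps K S \<longleftrightarrow> S \<subseteq> K \<and> (\<forall>M\<in>K. \<exists>N\<in>S. isomorphic M N) \<and>
     (\<forall>N1\<in>S. \<forall>N2\<in>S. isomorphic N1 N2 \<longrightarrow> N1 = N2)"

text \<open>Membership "in the class" up to isomorphism.\<close>
definition iso_closure :: "('b, 'a) astr set \<Rightarrow> ('b, 'a) astr set" where
  "iso_closure S = {M. \<exists>N\<in>S. isomorphic M N}"

definition hereditary :: "('b, 'a) astr set \<Rightarrow> bool" where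
  "hereditary S \<longleftrightarrow> (\<forall>M\<in>iso_closure S. \<forall>N. substr N M \<longrightarrow> N \<in> iso_closure S)"

definition jep :: "('b, 'a) astr set \<Rightarrow> bool" where
  "jep S \<longleftrightarrow> (\<forall>M1\<in>iso_closure S. \<forall>M2\<in>iso_closure S. \<exists>M3\<in>S. \<exists>f1 f2.
      embedding f1 M1 M3 \<and> embedding f2 M2 M3)"

definition amalgamation :: "('b, 'a) astr set \<Rightarrow> bool" where
  "amalgamation S \<longleftrightarrow> (\<forall>M0\<in>iso_closure S. \<forall>M1\<in>iso_closure S. \<forall>M2\<in>iso_closure S.
      substr M0 M1 \<longrightarrow> substr M0 M2 \<longrightarrow>
      (\<exists>M3\<in>S. \<exists>f1 f2. embedding f1 M1 M3 \<and> embedding f2 M2 M3 \<and>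
         (\<forall>x\<in>fst M0. f1 x = f2 x)))"

text \<open>In a finite relational language, finitely generated = finite.\<close>
definition fraisse_class :: "('b, 'a) astr set \<Rightarrow> bool" where
  "fraisse_class S \<longleftrightarrow> countable S \<and> (\<forall>M\<in>S. finite (fst M)) \<and>
     hereditary S \<and> jep S \<and> amalgamation S"

end

theory Submission
  imports Defs
begin


definition good :: "nat \<Rightarrow> 'c set \<Rightarrow> ('c \<Rightarrow> 'c \<Rightarrow> nat) \<Rightarrow> bool" where
  "good u M r \<longleftrightarrow> (\<forall>a\<in>M. u \<le> r a a) \<and> (\<forall>a\<in>M. \<forall>b\<in>M. u \<le> r a b \<or> u \<le> r b a) \<and>
     (\<forall>a\<in>M. \<forall>b\<in>M. \<forall>c\<in>M. min (r a b) (r b c) \<le> r a c)"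

lemma goodD:
  assumes "good u M r"
  shows "a \<in> M \<Longrightarrow> u \<le> r a a"
    and "a \<in> M \<Longrightarrow> b \<in> M \<Longrightarrow> u \<le> r a b \<or> u \<le> r b a"
    and "a \<in> M \<Longrightarrow> b \<in> M \<Longrightarrow> c \<in> M \<Longrightarrow> min (r a b) (r b c) \<le> r a c"
  using assms unfolding good_def by blast+

locale amal =
  fixes M1 M2 :: "'c set" and r :: "'c \<Rightarrow> 'c \<Rightarrow> nat" and u :: nat
  assumes fin1: "finite M1" and fin2: "finite M2"
    and g1: "good u M1 r" and g2: "good u M2 r"
begin

definition "Z = M1 \<inter> M2"

definition pp :: "'c \<Rightarrow> 'c \<Rightarrow> nat" where
  "pp x y = Max ((\<lambda>z. min (r x z) (r z y)) ` Z \<union> {0})"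

lemma finZ: "finite Z" using fin1 unfolding Z_def by auto

lemma pp_ge: "z \<in> Z \<Longrightarrow> min (r x z) (r z y) \<le> pp x y"
  unfolding pp_def using finZ by (intro Max_ge) auto

lemma pp_cases: "pp x y = 0 \<or> (\<exists>z\<in>Z. pp x y = min (r x z) (r z y))"
proof -
  have "pp x y \<in> (\<lambda>z. min (r x z) (r z y)) ` Z \<union> {0}"
    unfolding pp_def using finZ by (intro Max_in) auto
  then show ?thesis by auto
qed

lemma F_left:
  assumes "good u M r" "Z \<subseteq> M" "a \<in> M" "a' \<in> M"
  shows "min (r a a') (pp a' v) \<le> pp a v"
  using pp_cases[of a' v]
proof
  assume "pp a' v = 0" then show ?thesis by simp
next
  assume "\<exists>z\<in>Z. pp a' v = min (r a' z) (r z v)"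
  then obtain z where z: "z \<in> Z" "pp a' v = min (r a' z) (r z v)" by blast
  have "min (r a a') (r a' z) \<le> r a z" using goodD(3)[OF assms(1)] assms z by blast
  moreover have "min (r a z) (r z v) \<le> pp a v" using pp_ge z by blast
  ultimately show ?thesis using z by linarith
qed

lemma F_right:
  assumes "good u M r" "Z \<subseteq> M" "a \<in> M" "a' \<in> M"
  shows "min (pp v a) (r a a') \<le> pp v a'"
  using pp_cases[of v a]
proof
  assume "pp v a = 0" then show ?thesis by simp
next
  assume "\<exists>z\<in>Z. pp v a = min (r v z) (r z a)"
  then obtain z where z: "z \<in> Z" "pp v a = min (r v z) (r z a)" by blast
  have "min (r z a) (r a a') \<le> r z a'" using goodD(3)[OF assms(1)] assms z by blast
  moreover have "min (r v z) (r z a') \<le> pp v a'" using pp_ge z by blast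
  ultimately show ?thesis using z by linarith
qed

lemma F_le:
  assumes "good u M r" "Z \<subseteq> M" "a \<in> M" "a' \<in> M"
  shows "pp a a' \<le> r a a'"
  using pp_cases[of a a']
proof
  assume "\<exists>z\<in>Z. pp a a' = min (r a z) (r z a')"
  then obtain z where z: "z \<in> Z" "pp a a' = min (r a z) (r z a')" by blast
  have "min (r a z) (r z a') \<le> r a a'" using goodD(3)[OF assms(1)] assms z by blast
  then show ?thesis using z by linarith
qed simp

lemma F_cross:
  assumes "good u M r" "good u N r" "Z \<subseteq> M" "Z \<subseteq> N" "x \<in> M" "x' \<in> M" "y \<in> N"
  shows "min (pp x y) (pp y x') \<le> r x x'"
proof -
  have "min (pp x y) (pp y x') \<le> pp x x'"
    using F_right[OF assms(2,4,7), of _ x'] pp_cases[of y x'] 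
  proof -
    show ?thesis using pp_cases[of y x']
    proof
      assume "\<exists>z\<in>Z. pp y x' = min (r y z) (r z x')"
      then obtain z where z: "z \<in> Z" "pp y x' = min (r y z) (r z x')" by blast
      have "min (pp x y) (r y z) \<le> pp x z" using F_right[OF assms(2,4,7), of z x] z assms by blast
      moreover have "min (r x z) (r z x') \<le> pp x x'" using pp_ge z by blast
      moreover have "pp x z \<le> r x z" using F_le[OF assms(1,3,5), of z] z assms by blast
      ultimately show ?thesis using z by linarith
    qed simp
  qed
  also have "\<dots> \<le> r x x'" using F_le[OF assms(1,3,5,6)] .
  finally show ?thesis .
qed

lemma K1:
  assumes "good u M r" "good u N r" "Z \<subseteq> M" "Z \<subseteq> N" "x \<in> M" "y \<in> N" "z \<in> Z"
    and D: "pp y x \<le> pp x y"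
  shows "min u (r y z) \<le> r x z"
proof (rule ccontr)
  assume c: "\<not> ?thesis"
  have "z \<in> M" using assms by blast
  have "u \<le> r z x" using goodD(2)[OF assms(1) \<open>x \<in> M\<close> \<open>z \<in> M\<close>] c by linarith
  have "min (r y z) (r z x) \<le> pp y x" using pp_ge assms by blast
  then have m: "min u (r y z) \<le> pp x y" using D \<open>u \<le> r z x\<close> by linarith
  show False using pp_cases[of x y]
  proof
    assume "pp x y = 0" then show False using m c by linarith
  next
    assume "\<exists>z\<in>Z. pp x y = min (r x z) (r z y)"
    then obtain z1 where z1: "z1 \<in> Z" "pp x y = min (r x z1) (r z1 y)" by blast
    have "min (r z1 y) (r y z) \<le> r z1 z" using goodD(3)[OF assms(2), of z1 y z] assms z1 by blast
    moreover have "min (r x z1) (r z1 z) \<le> r x z" using goodD(3)[OF assms(1), of x z1 z] assms z1 by blast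
    ultimately show False using m c z1 by linarith
  qed
qed

lemma K2:
  assumes "good u M r" "good u N r" "Z \<subseteq> M" "Z \<subseteq> N" "x \<in> M" "y \<in> N" "z \<in> Z"
    and D: "pp y x \<le> pp x y"
  shows "min u (r z x) \<le> r z y"
proof (rule ccontr)
  assume c: "\<not> ?thesis"
  have "z \<in> N" using assms by blast
  have "u \<le> r y z" using goodD(2)[OF assms(2) \<open>y \<in> N\<close> \<open>z \<in> N\<close>] c by linarith
  have "min (r y z) (r z x) \<le> pp y x" using pp_ge assms by blast
  then have m: "min u (r z x) \<le> pp x y" using D \<open>u \<le> r y z\<close> by linarith
  show False using pp_cases[of x y]
  proof
    assume "pp x y = 0" then show False using m c by linarith
  next
    assume "\<exists>z\<in>Z. pp x y = min (r x z) (r z y)"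
    then obtain z1 where z1: "z1 \<in> Z" "pp x y = min (r x z1) (r z1 y)" by blast
    have "min (r z x) (r x z1) \<le> r z z1" using goodD(3)[OF assms(1), of z x z1] assms z1 by blast
    moreover have "min (r z z1) (r z1 y) \<le> r z y" using goodD(3)[OF assms(2), of z z1 y] assms z1 by blast
    ultimately show False using m c z1 by linarith
  qed
qed

lemma H1:
  assumes "good u M r" "good u N r" "Z \<subseteq> M" "Z \<subseteq> N" "x \<in> M" "y \<in> N" "x' \<in> M"
    and D: "pp y x \<le> pp x y"
  shows "min u (pp y x') \<le> r x x'"
  using pp_cases[of y x']
proof
  assume "\<exists>z\<in>Z. pp y x' = min (r y z) (r z x')"
  then obtain z where z: "z \<in> Z" "pp y x' = min (r y z) (r z x')" by blast
  have "min u (r y z) \<le> r x z" using K1[OF assms(1-6) z(1) D] .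
  moreover have "min (r x z) (r z x') \<le> r x x'" using goodD(3)[OF assms(1), of x z x'] assms z by blast
  ultimately show ?thesis using z by linarith
qed simp

lemma H2:
  assumes "good u M r" "good u N r" "Z \<subseteq> M" "Z \<subseteq> N" "x \<in> M" "y \<in> N" "y' \<in> N"
    and D: "pp y x \<le> pp x y"
  shows "min u (pp y' x) \<le> r y' y"
  using pp_cases[of y' x]
proof
  assume "\<exists>z\<in>Z. pp y' x = min (r y' z) (r z x)"
  then obtain z where z: "z \<in> Z" "pp y' x = min (r y' z) (r z x)" by blast
  have "min u (r z x) \<le> r z y" using K2[OF assms(1-6) z(1) D] .
  moreover have "min (r y' z) (r z y) \<le> r y' y" using goodD(3)[OF assms(2), of y' z y] assms z by blast
  ultimately show ?thesis using z by linarith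
qed simp


lemma Z1: "Z \<subseteq> M1" and Z2: "Z \<subseteq> M2" unfolding Z_def by auto

definition T :: "'c \<Rightarrow> 'c \<Rightarrow> nat" where
  "T x y = (if (x \<in> M1 \<and> y \<in> M1) \<or> (x \<in> M2 \<and> y \<in> M2) then r x y
     else if x \<in> M1 then (if pp y x \<le> pp x y then max (pp x y) u else pp x y)
     else (if pp x y \<le> pp y x then pp x y else max (pp x y) u))"

lemma T1: "x \<in> M1 \<Longrightarrow> y \<in> M1 \<Longrightarrow> T x y = r x y" unfolding T_def by auto
lemma T2: "x \<in> M2 \<Longrightarrow> y \<in> M2 \<Longrightarrow> T x y = r x y" unfolding T_def by auto
lemma Tab: "a \<in> M1 - M2 \<Longrightarrow> b \<in> M2 - M1 \<Longrightarrow>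
   T a b = (if pp b a \<le> pp a b then max (pp a b) u else pp a b)" unfolding T_def by auto
lemma Tba: "a \<in> M1 - M2 \<Longrightarrow> b \<in> M2 - M1 \<Longrightarrow>
   T b a = (if pp b a \<le> pp a b then pp b a else max (pp b a) u)" unfolding T_def by auto

lemmas K1a = K1[OF g1 g2 Z1 Z2] and K1b = K1[OF g2 g1 Z2 Z1]
lemmas K2a = K2[OF g1 g2 Z1 Z2] and K2b = K2[OF g2 g1 Z2 Z1]
lemmas H1a = H1[OF g1 g2 Z1 Z2] and H1b = H1[OF g2 g1 Z2 Z1]
lemmas H2a = H2[OF g1 g2 Z1 Z2] and H2b = H2[OF g2 g1 Z2 Z1]
lemmas FL1 = F_left[OF g1 Z1] and FL2 = F_left[OF g2 Z2]
lemmas FR1 = F_right[OF g1 Z1] and FR2 = F_right[OF g2 Z2]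
lemmas FE1 = F_le[OF g1 Z1] and FE2 = F_le[OF g2 Z2]
lemmas FC1 = F_cross[OF g1 g2 Z1 Z2] and FC2 = F_cross[OF g2 g1 Z2 Z1]

context
  fixes a b z
  assumes a: "a \<in> M1 - M2" and b: "b \<in> M2 - M1" and z: "z \<in> Z"
begin
lemma zM1: "z \<in> M1" and zM2: "z \<in> M2" using z Z1 Z2 by auto

lemma c1: "min (T a b) (r b z) \<le> r a z"
proof -
  have "min (pp a b) (r b z) \<le> pp a z" using FR2 b zM2 by blast
  moreover have "pp a z \<le> r a z" using FE1 a zM1 by blast
  moreover have "pp b a \<le> pp a b \<Longrightarrow> min u (r b z) \<le> r a z" using K1a a b z by blast
  ultimately show ?thesis unfolding Tab[OF a b] by (auto split: if_splits)
qed

lemma c2: "min (r a z) (r z b) \<le> T a b"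
  using pp_ge[OF z, of a b] unfolding Tab[OF a b] by (auto split: if_splits)

lemma c3: "min (T b a) (r a z) \<le> r b z"
proof -
  have "min (pp b a) (r a z) \<le> pp b z" using FR1 a zM1 by blast
  moreover have "pp b z \<le> r b z" using FE2 b zM2 by blast
  moreover have "pp a b \<le> pp b a \<Longrightarrow> min u (r a z) \<le> r b z" using K1b a b z by blast
  ultimately show ?thesis unfolding Tba[OF a b] by (auto split: if_splits)
qed

lemma c4: "min (r b z) (r z a) \<le> T b a"
  using pp_ge[OF z, of b a] unfolding Tba[OF a b] by (auto split: if_splits)

lemma c5: "min (r z a) (T a b) \<le> r z b"
proof -
  have "min (r z a) (pp a b) \<le> pp z b" using FL1 a zM1 by blast
  moreover have "pp z b \<le> r z b" using FE2 b zM2 by blast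
  moreover have "pp b a \<le> pp a b \<Longrightarrow> min u (r z a) \<le> r z b" using K2a a b z by blast
  ultimately show ?thesis unfolding Tab[OF a b] by (auto split: if_splits)
qed

lemma c6: "min (r z b) (T b a) \<le> r z a"
proof -
  have "min (r z b) (pp b a) \<le> pp z a" using FL2 b zM2 by blast
  moreover have "pp z a \<le> r z a" using FE1 a zM1 by blast
  moreover have "pp a b \<le> pp b a \<Longrightarrow> min u (r z b) \<le> r z a" using K2b a b z by blast
  ultimately show ?thesis unfolding Tba[OF a b] by (auto split: if_splits)
qed
end

context
  fixes a a' b
  assumes a: "a \<in> M1 - M2" and a': "a' \<in> M1 - M2" and b: "b \<in> M2 - M1"
begin

lemma c7: "min (r a a') (T a' b) \<le> T a b"
proof -
  have f1: "min (r a a') (pp a' b) \<le> pp a b" using FL1 a a' by blast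
  have f2: "min (pp b a) (r a a') \<le> pp b a'" using FR1 a a' by blast
  show ?thesis unfolding Tab[OF a b] Tab[OF a' b] using f1 f2 by (auto split: if_splits)
qed

lemma c8: "min (T b a) (r a a') \<le> T b a'"
proof -
  have f1: "min (r a a') (pp a' b) \<le> pp a b" using FL1 a a' by blast
  have f2: "min (pp b a) (r a a') \<le> pp b a'" using FR1 a a' by blast
  show ?thesis unfolding Tba[OF a b] Tba[OF a' b] using f1 f2 by (auto split: if_splits)
qed

lemma c9: "min (T a b) (T b a') \<le> r a a'"
proof -
  have f0: "min (pp a b) (pp b a') \<le> r a a'" using FC1 a a' b by blast
  have f1: "min (r a' a) (pp a b) \<le> pp a' b" using FL1 a a' by blast
  have f2: "min (pp b a') (r a' a) \<le> pp b a" using FR1 a a' by blast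
  have t: "u \<le> r a a' \<or> u \<le> r a' a" using goodD(2)[OF g1] a a' by blast
  have h1: "pp b a \<le> pp a b \<Longrightarrow> min u (pp b a') \<le> r a a'" using H1a a b a' by blast
  have h2: "pp a' b \<le> pp b a' \<Longrightarrow> min u (pp a b) \<le> r a a'" using H2b a b a' by blast
  show ?thesis unfolding Tab[OF a b] Tba[OF a' b] using f0 f1 f2 t h1 h2 by (auto split: if_splits)
qed
end

context
  fixes a b b'
  assumes a: "a \<in> M1 - M2" and b: "b \<in> M2 - M1" and b': "b' \<in> M2 - M1"
begin

lemma c10: "min (T a b) (r b b') \<le> T a b'"
proof -
  have f1: "min (pp a b) (r b b') \<le> pp a b'" using FR2 b b' by blast
  have f2: "min (r b b') (pp b' a) \<le> pp b a" using FL2 b b' by blast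
  show ?thesis unfolding Tab[OF a b] Tab[OF a b'] using f1 f2 by (auto split: if_splits)
qed

lemma c11: "min (r b b') (T b' a) \<le> T b a"
proof -
  have f1: "min (pp a b) (r b b') \<le> pp a b'" using FR2 b b' by blast
  have f2: "min (r b b') (pp b' a) \<le> pp b a" using FL2 b b' by blast
  show ?thesis unfolding Tba[OF a b] Tba[OF a b'] using f1 f2 by (auto split: if_splits)
qed

lemma c12: "min (T b a) (T a b') \<le> r b b'"
proof -
  have f0: "min (pp b a) (pp a b') \<le> r b b'" using FC2 a b b' by blast
  have f1: "min (pp a b') (r b' b) \<le> pp a b" using FR2 b b' by blast
  have f2: "min (r b' b) (pp b a) \<le> pp b' a" using FL2 b b' by blast
  have t: "u \<le> r b b' \<or> u \<le> r b' b" using goodD(2)[OF g2] b b' by blast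
  have h1: "pp a b \<le> pp b a \<Longrightarrow> min u (pp a b') \<le> r b b'" using H1b a b b' by blast
  have h2: "pp b' a \<le> pp a b' \<Longrightarrow> min u (pp b a) \<le> r b b'" using H2a a b b' by blast
  show ?thesis unfolding Tba[OF a b] Tab[OF a b'] using f0 f1 f2 t h1 h2 by (auto split: if_splits)
qed
end


lemma T_trans:
  assumes x: "x \<in> M1 \<union> M2" and y: "y \<in> M1 \<union> M2" and w: "w \<in> M1 \<union> M2"
  shows "min (T x y) (T y w) \<le> T x w"
proof -
  have t0: "min (T x y) (T y w) \<le> T x w" if "x \<in> M1 - M2" "y \<in> M1 - M2" "w \<in> M1 - M2"
    proof - have "x \<in> M1" "y \<in> M1" "w \<in> M1" using that Z1 by auto then show ?thesis using goodD(3)[OF g1, of x y w] by (simp add: T1) qed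
  have t1: "min (T x y) (T y w) \<le> T x w" if "x \<in> M1 - M2" "y \<in> M1 - M2" "w \<in> Z"
    proof - have "x \<in> M1" "y \<in> M1" "w \<in> M1" using that Z1 by auto then show ?thesis using goodD(3)[OF g1, of x y w] by (simp add: T1) qed
  have t2: "min (T x y) (T y w) \<le> T x w" if "x \<in> M1 - M2" "y \<in> M1 - M2" "w \<in> M2 - M1"
    proof - have m: "x \<in> M1" "x \<notin> M2" "y \<in> M1" "y \<notin> M2" "w \<notin> M1" "w \<in> M2" using that unfolding Z_def by auto show ?thesis using c7[OF that(1,2,3)] by (simp add: T1 T2 m) qed
  have t3: "min (T x y) (T y w) \<le> T x w" if "x \<in> M1 - M2" "y \<in> Z" "w \<in> M1 - M2"
    proof - have "x \<in> M1" "y \<in> M1" "w \<in> M1" using that Z1 by auto then show ?thesis using goodD(3)[OF g1, of x y w] by (simp add: T1) qed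
  have t4: "min (T x y) (T y w) \<le> T x w" if "x \<in> M1 - M2" "y \<in> Z" "w \<in> Z"
    proof - have "x \<in> M1" "y \<in> M1" "w \<in> M1" using that Z1 by auto then show ?thesis using goodD(3)[OF g1, of x y w] by (simp add: T1) qed
  have t5: "min (T x y) (T y w) \<le> T x w" if "x \<in> M1 - M2" "y \<in> Z" "w \<in> M2 - M1"
    proof - have m: "x \<in> M1" "x \<notin> M2" "y \<in> M1" "y \<in> M2" "w \<notin> M1" "w \<in> M2" using that unfolding Z_def by auto show ?thesis using c2[OF that(1,3,2)] by (simp add: T1 T2 m) qed
  have t6: "min (T x y) (T y w) \<le> T x w" if "x \<in> M1 - M2" "y \<in> M2 - M1" "w \<in> M1 - M2"
    proof - have m: "x \<in> M1" "x \<notin> M2" "y \<notin> M1" "y \<in> M2" "w \<in> M1" "w \<notin> M2" using that unfolding Z_def by auto show ?thesis using c9[OF that(1,3,2)] by (simp add: T1 T2 m) qed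
  have t7: "min (T x y) (T y w) \<le> T x w" if "x \<in> M1 - M2" "y \<in> M2 - M1" "w \<in> Z"
    proof - have m: "x \<in> M1" "x \<notin> M2" "y \<notin> M1" "y \<in> M2" "w \<in> M1" "w \<in> M2" using that unfolding Z_def by auto show ?thesis using c1[OF that(1,2,3)] by (simp add: T1 T2 m) qed
  have t8: "min (T x y) (T y w) \<le> T x w" if "x \<in> M1 - M2" "y \<in> M2 - M1" "w \<in> M2 - M1"
    proof - have m: "x \<in> M1" "x \<notin> M2" "y \<notin> M1" "y \<in> M2" "w \<notin> M1" "w \<in> M2" using that unfolding Z_def by auto show ?thesis using c10[OF that(1,2,3)] by (simp add: T1 T2 m) qed
  have t9: "min (T x y) (T y w) \<le> T x w" if "x \<in> Z" "y \<in> M1 - M2" "w \<in> M1 - M2"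
    proof - have "x \<in> M1" "y \<in> M1" "w \<in> M1" using that Z1 by auto then show ?thesis using goodD(3)[OF g1, of x y w] by (simp add: T1) qed
  have t10: "min (T x y) (T y w) \<le> T x w" if "x \<in> Z" "y \<in> M1 - M2" "w \<in> Z"
    proof - have "x \<in> M1" "y \<in> M1" "w \<in> M1" using that Z1 by auto then show ?thesis using goodD(3)[OF g1, of x y w] by (simp add: T1) qed
  have t11: "min (T x y) (T y w) \<le> T x w" if "x \<in> Z" "y \<in> M1 - M2" "w \<in> M2 - M1"
    proof - have m: "x \<in> M1" "x \<in> M2" "y \<in> M1" "y \<notin> M2" "w \<notin> M1" "w \<in> M2" using that unfolding Z_def by auto show ?thesis using c5[OF that(2,3,1)] by (simp add: T1 T2 m) qed
  have t12: "min (T x y) (T y w) \<le> T x w" if "x \<in> Z" "y \<in> Z" "w \<in> M1 - M2"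
    proof - have "x \<in> M1" "y \<in> M1" "w \<in> M1" using that Z1 by auto then show ?thesis using goodD(3)[OF g1, of x y w] by (simp add: T1) qed
  have t13: "min (T x y) (T y w) \<le> T x w" if "x \<in> Z" "y \<in> Z" "w \<in> Z"
    proof - have "x \<in> M2" "y \<in> M2" "w \<in> M2" using that Z2 by auto then show ?thesis using goodD(3)[OF g2, of x y w] by (simp add: T2) qed
  have t14: "min (T x y) (T y w) \<le> T x w" if "x \<in> Z" "y \<in> Z" "w \<in> M2 - M1"
    proof - have "x \<in> M2" "y \<in> M2" "w \<in> M2" using that Z2 by auto then show ?thesis using goodD(3)[OF g2, of x y w] by (simp add: T2) qed
  have t15: "min (T x y) (T y w) \<le> T x w" if "x \<in> Z" "y \<in> M2 - M1" "w \<in> M1 - M2"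
    proof - have m: "x \<in> M1" "x \<in> M2" "y \<notin> M1" "y \<in> M2" "w \<in> M1" "w \<notin> M2" using that unfolding Z_def by auto show ?thesis using c6[OF that(3,2,1)] by (simp add: T1 T2 m) qed
  have t16: "min (T x y) (T y w) \<le> T x w" if "x \<in> Z" "y \<in> M2 - M1" "w \<in> Z"
    proof - have "x \<in> M2" "y \<in> M2" "w \<in> M2" using that Z2 by auto then show ?thesis using goodD(3)[OF g2, of x y w] by (simp add: T2) qed
  have t17: "min (T x y) (T y w) \<le> T x w" if "x \<in> Z" "y \<in> M2 - M1" "w \<in> M2 - M1"
    proof - have "x \<in> M2" "y \<in> M2" "w \<in> M2" using that Z2 by auto then show ?thesis using goodD(3)[OF g2, of x y w] by (simp add: T2) qed
  have t18: "min (T x y) (T y w) \<le> T x w" if "x \<in> M2 - M1" "y \<in> M1 - M2" "w \<in> M1 - M2"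
    proof - have m: "x \<notin> M1" "x \<in> M2" "y \<in> M1" "y \<notin> M2" "w \<in> M1" "w \<notin> M2" using that unfolding Z_def by auto show ?thesis using c8[OF that(2,3,1)] by (simp add: T1 T2 m) qed
  have t19: "min (T x y) (T y w) \<le> T x w" if "x \<in> M2 - M1" "y \<in> M1 - M2" "w \<in> Z"
    proof - have m: "x \<notin> M1" "x \<in> M2" "y \<in> M1" "y \<notin> M2" "w \<in> M1" "w \<in> M2" using that unfolding Z_def by auto show ?thesis using c3[OF that(2,1,3)] by (simp add: T1 T2 m) qed
  have t20: "min (T x y) (T y w) \<le> T x w" if "x \<in> M2 - M1" "y \<in> M1 - M2" "w \<in> M2 - M1"
    proof - have m: "x \<notin> M1" "x \<in> M2" "y \<in> M1" "y \<notin> M2" "w \<notin> M1" "w \<in> M2" using that unfolding Z_def by auto show ?thesis using c12[OF that(2,1,3)] by (simp add: T1 T2 m) qed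
  have t21: "min (T x y) (T y w) \<le> T x w" if "x \<in> M2 - M1" "y \<in> Z" "w \<in> M1 - M2"
    proof - have m: "x \<notin> M1" "x \<in> M2" "y \<in> M1" "y \<in> M2" "w \<in> M1" "w \<notin> M2" using that unfolding Z_def by auto show ?thesis using c4[OF that(3,1,2)] by (simp add: T1 T2 m) qed
  have t22: "min (T x y) (T y w) \<le> T x w" if "x \<in> M2 - M1" "y \<in> Z" "w \<in> Z"
    proof - have "x \<in> M2" "y \<in> M2" "w \<in> M2" using that Z2 by auto then show ?thesis using goodD(3)[OF g2, of x y w] by (simp add: T2) qed
  have t23: "min (T x y) (T y w) \<le> T x w" if "x \<in> M2 - M1" "y \<in> Z" "w \<in> M2 - M1"
    proof - have "x \<in> M2" "y \<in> M2" "w \<in> M2" using that Z2 by auto then show ?thesis using goodD(3)[OF g2, of x y w] by (simp add: T2) qed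
  have t24: "min (T x y) (T y w) \<le> T x w" if "x \<in> M2 - M1" "y \<in> M2 - M1" "w \<in> M1 - M2"
    proof - have m: "x \<notin> M1" "x \<in> M2" "y \<notin> M1" "y \<in> M2" "w \<in> M1" "w \<notin> M2" using that unfolding Z_def by auto show ?thesis using c11[OF that(3,1,2)] by (simp add: T1 T2 m) qed
  have t25: "min (T x y) (T y w) \<le> T x w" if "x \<in> M2 - M1" "y \<in> M2 - M1" "w \<in> Z"
    proof - have "x \<in> M2" "y \<in> M2" "w \<in> M2" using that Z2 by auto then show ?thesis using goodD(3)[OF g2, of x y w] by (simp add: T2) qed
  have t26: "min (T x y) (T y w) \<le> T x w" if "x \<in> M2 - M1" "y \<in> M2 - M1" "w \<in> M2 - M1"
    proof - have "x \<in> M2" "y \<in> M2" "w \<in> M2" using that Z2 by auto then show ?thesis using goodD(3)[OF g2, of x y w] by (simp add: T2) qed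
  have cs: "v \<in> M1 - M2 \<or> v \<in> Z \<or> v \<in> M2 - M1" if "v \<in> M1 \<union> M2" for v
    using that unfolding Z_def by blast
  from cs[OF x] cs[OF y] cs[OF w] show ?thesis
    by (elim disjE; simp add: t0 t1 t2 t3 t4 t5 t6 t7 t8 t9 t10 t11 t12 t13 t14 t15 t16 t17 t18 t19 t20 t21 t22 t23 t24 t25 t26)
qed

lemma T_refl: "x \<in> M1 \<union> M2 \<Longrightarrow> u \<le> T x x"
  using goodD(1)[OF g1] goodD(1)[OF g2] by (auto simp: T1 T2)

lemma T_tot: assumes x: "x \<in> M1 \<union> M2" and y: "y \<in> M1 \<union> M2"
  shows "u \<le> T x y \<or> u \<le> T y x"
proof -
  have A: "u \<le> T a b \<or> u \<le> T b a" if "a \<in> M1 - M2" "b \<in> M2 - M1" for a b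
    unfolding Tab[OF that] Tba[OF that] by auto
  show ?thesis
  proof (cases "(x \<in> M1 \<and> y \<in> M1)")
    case True then show ?thesis using goodD(2)[OF g1, of x y] by (auto simp: T1)
  next
    case F1: False
    show ?thesis
    proof (cases "(x \<in> M2 \<and> y \<in> M2)")
      case True then show ?thesis using goodD(2)[OF g2, of x y] by (auto simp: T2)
    next
      case False then show ?thesis using F1 x y A[of x y] A[of y x] by blast
    qed
  qed
qed

lemma T_good: "good u (M1 \<union> M2) T"
  unfolding good_def using T_refl T_tot T_trans by blast

lemma T_vals: "x \<in> M1 \<union> M2 \<Longrightarrow> y \<in> M1 \<union> M2 \<Longrightarrow>
  T x y \<in> {r v w | v w. (v \<in> M1 \<and> w \<in> M1) \<or> (v \<in> M2 \<and> w \<in> M2)} \<union> {0, u}"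
proof -
  assume x: "x \<in> M1 \<union> M2" and y: "y \<in> M1 \<union> M2"
  have P: "pp v w \<in> {r v w | v w. (v \<in> M1 \<and> w \<in> M1) \<or> (v \<in> M2 \<and> w \<in> M2)} \<union> {0, u}"
    if "v \<in> M1 \<union> M2" "w \<in> M1 \<union> M2" for v w
    using pp_cases[of v w] that Z1 Z2 unfolding min_def by (auto split: if_splits)
  show ?thesis using P[OF x y] x y unfolding T_def max_def by (auto split: if_splits)
qed

end

lemma core_amalg:
  assumes "finite M1" "finite M2" "good u M1 r" "good u M2 r"
  shows "\<exists>T. good u (M1 \<union> M2) T \<and> (\<forall>x\<in>M1. \<forall>y\<in>M1. T x y = r x y) \<and>
    (\<forall>x\<in>M2. \<forall>y\<in>M2. T x y = r x y) \<and>
    (\<forall>x\<in>M1 \<union> M2. \<forall>y\<in>M1 \<union> M2.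
       T x y \<in> {r v w | v w. (v \<in> M1 \<and> w \<in> M1) \<or> (v \<in> M2 \<and> w \<in> M2)} \<union> {0, u})"
proof -
  interpret amal M1 M2 r u using assms by unfold_locales
  show ?thesis using T_good T1 T2 T_vals by blast
qed



lemma ch_alg: "ul_chain A \<Longrightarrow> ul_algebra A" unfolding ul_chain_def by (rule conjunct1)

lemma ALG:
  assumes "ul_chain A"
  shows "uzero A \<in> ucar A" "uone A \<in> ucar A" "ubot A \<in> ucar A" "utop A \<in> ucar A"
    and ALG_cl: "\<forall>a\<in>ucar A. \<forall>b\<in>ucar A.
        umeet A a b \<in> ucar A \<and> ujoin A a b \<in> ucar A \<and>
        ufus A a b \<in> ucar A \<and> uimp A a b \<in> ucar A"
    and ALG_lat: "\<forall>a\<in>ucar A. \<forall>b\<in>ucar A.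
        umeet A a b = umeet A b a \<and> ujoin A a b = ujoin A b a \<and>
        umeet A a (ujoin A a b) = a \<and> ujoin A a (umeet A a b) = a"
    and ALG_assoc: "\<forall>a\<in>ucar A. \<forall>b\<in>ucar A. \<forall>c\<in>ucar A.
        umeet A (umeet A a b) c = umeet A a (umeet A b c) \<and>
        ujoin A (ujoin A a b) c = ujoin A a (ujoin A b c)"
    and ALG_bnd: "\<forall>a\<in>ucar A. ul_le A (ubot A) a \<and> ul_le A a (utop A)"
    and "\<forall>a\<in>ucar A. \<forall>b\<in>ucar A. \<forall>c\<in>ucar A.
        ufus A (ufus A a b) c = ufus A a (ufus A b c)"
    and "\<forall>a\<in>ucar A. \<forall>b\<in>ucar A. ufus A a b = ufus A b a"
    and ALG_unit: "\<forall>a\<in>ucar A. ufus A a (uone A) = a"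
    and ALG_res: "\<forall>a\<in>ucar A. \<forall>b\<in>ucar A. \<forall>c\<in>ucar A.
        ul_le A (ufus A a b) c \<longleftrightarrow> ul_le A b (uimp A a c)"
  apply (insert ch_alg[OF assms])
  apply (unfold ul_algebra_def)
  apply (elim conjE; assumption)+
  done

lemma cl:
  assumes "ul_chain A" "a \<in> ucar A" "b \<in> ucar A"
  shows "umeet A a b \<in> ucar A" "ujoin A a b \<in> ucar A" "uimp A a b \<in> ucar A" "ufus A a b \<in> ucar A"
  using ALG_cl[OF assms(1)] assms(2,3) by blast+

lemma cl0:
  assumes "ul_chain A"
  shows "uone A \<in> ucar A" "ubot A \<in> ucar A"
  using ALG[OF assms] by simp_all

lemma meet_comm: "ul_chain A \<Longrightarrow> a \<in> ucar A \<Longrightarrow> b \<in> ucar A \<Longrightarrow> umeet A a b = umeet A b a"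
  by (drule ALG_lat) blast
lemma join_comm: "ul_chain A \<Longrightarrow> a \<in> ucar A \<Longrightarrow> b \<in> ucar A \<Longrightarrow> ujoin A a b = ujoin A b a"
  by (drule ALG_lat) blast
lemma absorb1: "ul_chain A \<Longrightarrow> a \<in> ucar A \<Longrightarrow> b \<in> ucar A \<Longrightarrow> umeet A a (ujoin A a b) = a"
  by (drule ALG_lat) blast
lemma absorb2: "ul_chain A \<Longrightarrow> a \<in> ucar A \<Longrightarrow> b \<in> ucar A \<Longrightarrow> ujoin A a (umeet A a b) = a"
  by (drule ALG_lat) blast
lemma meet_assoc: "ul_chain A \<Longrightarrow> a \<in> ucar A \<Longrightarrow> b \<in> ucar A \<Longrightarrow> c \<in> ucar A \<Longrightarrow>
   umeet A (umeet A a b) c = umeet A a (umeet A b c)"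
  by (drule ALG_assoc) blast

lemma le_refl: assumes "ul_chain A" "a \<in> ucar A" shows "ul_le A a a"
proof -
  have m: "umeet A a a \<in> ucar A" using cl(1)[OF assms assms(2)] .
  have "umeet A a (ujoin A a (umeet A a a)) = a" using absorb1[OF assms m] .
  moreover have "ujoin A a (umeet A a a) = a" using absorb2[OF assms assms(2)] .
  ultimately show ?thesis unfolding ul_le_def by simp
qed

lemma le_antisym: "ul_chain A \<Longrightarrow> a \<in> ucar A \<Longrightarrow> b \<in> ucar A \<Longrightarrow> ul_le A a b \<Longrightarrow> ul_le A b a \<Longrightarrow> a = b"
  unfolding ul_le_def using meet_comm[of A a b] by simp

lemma le_trans: assumes "ul_chain A" "a \<in> ucar A" "b \<in> ucar A" "c \<in> ucar A" "ul_le A a b" "ul_le A b c"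
  shows "ul_le A a c"
proof -
  have "umeet A a c = umeet A (umeet A a b) c" using assms(5) unfolding ul_le_def by simp
  also have "\<dots> = umeet A a (umeet A b c)" using meet_assoc[OF assms(1-4)] .
  also have "\<dots> = a" using assms(5,6) unfolding ul_le_def by simp
  finally show ?thesis unfolding ul_le_def .
qed

lemma le_total: "ul_chain A \<Longrightarrow> a \<in> ucar A \<Longrightarrow> b \<in> ucar A \<Longrightarrow> ul_le A a b \<or> ul_le A b a"
  unfolding ul_chain_def by (drule conjunct2) blast

lemma meet1: "ul_le A a b \<Longrightarrow> umeet A a b = a" unfolding ul_le_def by simp
lemma meet2: "ul_chain A \<Longrightarrow> a \<in> ucar A \<Longrightarrow> b \<in> ucar A \<Longrightarrow> ul_le A b a \<Longrightarrow> umeet A a b = b"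
  unfolding ul_le_def using meet_comm[of A a b] by simp
lemma join1: assumes "ul_chain A" "a \<in> ucar A" "b \<in> ucar A" "ul_le A a b" shows "ujoin A a b = b"
proof -
  have "ujoin A b (umeet A b a) = b" using absorb2[OF assms(1,3,2)] .
  moreover have "umeet A b a = a" using meet2[OF assms(1,3,2,4)] .
  ultimately show ?thesis using join_comm[OF assms(1-3)] by simp
qed
lemma join2: assumes "ul_chain A" "a \<in> ucar A" "b \<in> ucar A" "ul_le A b a" shows "ujoin A a b = a"
  using join1[OF assms(1,3,2,4)] join_comm[OF assms(1-3)] by simp

lemma imp_iff: assumes "ul_chain A" "a \<in> ucar A" "b \<in> ucar A"
  shows "ul_le A (uone A) (uimp A a b) \<longleftrightarrow> ul_le A a b"
proof -
  have u: "uone A \<in> ucar A" using cl0 assms by blast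
  have "ul_le A (ufus A a (uone A)) b \<longleftrightarrow> ul_le A (uone A) (uimp A a b)"
    using ALG_res[OF assms(1)] assms u by blast
  moreover have "ufus A a (uone A) = a" using ALG_unit[OF assms(1)] assms by blast
  ultimately show ?thesis by simp
qed

lemma bot_le: "ul_chain A \<Longrightarrow> a \<in> ucar A \<Longrightarrow> ul_le A (ubot A) a"
  using ALG_bnd by blast

definition rk :: "('a, 'm) ul_alg_scheme \<Rightarrow> 'a set \<Rightarrow> 'a \<Rightarrow> nat" where
  "rk A V v = card {w \<in> V. ul_le A w v \<and> w \<noteq> v}"

lemma rk_less:
  assumes ch: "ul_chain A" and V: "finite V" "V \<subseteq> ucar A" and vw: "v \<in> V" "w \<in> V" "ul_le A v w" "v \<noteq> w"
  shows "rk A V v < rk A V w"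
proof -
  have "{x \<in> V. ul_le A x v \<and> x \<noteq> v} \<subset> {x \<in> V. ul_le A x w \<and> x \<noteq> w}"
  proof
    show "{x \<in> V. ul_le A x v \<and> x \<noteq> v} \<subseteq> {x \<in> V. ul_le A x w \<and> x \<noteq> w}"
    proof
      fix x assume x: "x \<in> {x \<in> V. ul_le A x v \<and> x \<noteq> v}"
      then have xv: "x \<in> V" "ul_le A x v" "x \<noteq> v" by auto
      have "ul_le A x w" using le_trans[OF ch, of x v w] xv vw V by blast
      moreover have "x \<noteq> w"
      proof
        assume "x = w"
        then have "v = w" using le_antisym[OF ch, of v w] xv vw V by blast
        then show False using vw by simp
      qed
      ultimately show "x \<in> {x \<in> V. ul_le A x w \<and> x \<noteq> w}" using xv by simp
    qed
    show "{x \<in> V. ul_le A x v \<and> x \<noteq> v} \<noteq> {x \<in> V. ul_le A x w \<and> x \<noteq> w}"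
      using vw by blast
  qed
  then show ?thesis unfolding rk_def using V by (intro psubset_card_mono) auto
qed

lemma rk_le_iff:
  assumes ch: "ul_chain A" and V: "finite V" "V \<subseteq> ucar A" and vw: "v \<in> V" "w \<in> V"
  shows "ul_le A v w \<longleftrightarrow> rk A V v \<le> rk A V w"
proof
  assume "ul_le A v w"
  then show "rk A V v \<le> rk A V w" using rk_less[OF ch V vw] by (cases "v = w") auto
next
  assume a: "rk A V v \<le> rk A V w"
  show "ul_le A v w"
  proof (rule ccontr)
    assume n: "\<not> ul_le A v w"
    then have "ul_le A w v" using le_total[OF ch, of v w] vw V by blast
    moreover have "w \<noteq> v" using n le_refl[OF ch, of v] vw V by blast
    ultimately have "rk A V w < rk A V v" using rk_less[OF ch V vw(2,1)] by blast
    then show False using a by simp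
  qed
qed

lemma rk_inj:
  assumes ch: "ul_chain A" and V: "finite V" "V \<subseteq> ucar A"
  shows "inj_on (rk A V) V"
proof
  fix v w assume vw: "v \<in> V" "w \<in> V" "rk A V v = rk A V w"
  then have "ul_le A v w" "ul_le A w v" using rk_le_iff[OF ch V] by auto
  then show "v = w" using le_antisym[OF ch] vw V by blast
qed

lemma rk_bot:
  assumes ch: "ul_chain A" and V: "V \<subseteq> ucar A"
  shows "rk A V (ubot A) = 0"
proof -
  have "{w \<in> V. ul_le A w (ubot A) \<and> w \<noteq> ubot A} = {}"
    using le_antisym[OF ch] bot_le[OF ch] cl0[OF ch] V by blast
  then show ?thesis unfolding rk_def by (metis card.empty)
qed

lemma rk_meet:
  assumes ch: "ul_chain A" and V: "finite V" "V \<subseteq> ucar A" and xy: "x \<in> V" "y \<in> V"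
  shows "umeet A x y \<in> V \<and> rk A V (umeet A x y) = min (rk A V x) (rk A V y)"
proof (cases "ul_le A x y")
  case True
  then have "umeet A x y = x" by (rule meet1)
  moreover have "rk A V x \<le> rk A V y" using True rk_le_iff[OF ch V xy] by simp
  ultimately show ?thesis using xy by simp
next
  case False
  then have yx: "ul_le A y x" using le_total[OF ch] xy V by blast
  then have "umeet A x y = y" using meet2[OF ch, of x y] xy V by blast
  moreover have "rk A V y \<le> rk A V x" using yx rk_le_iff[OF ch V xy(2,1)] by simp
  ultimately show ?thesis using xy by simp
qed

lemma rk_join:
  assumes ch: "ul_chain A" and V: "finite V" "V \<subseteq> ucar A" and xy: "x \<in> V" "y \<in> V"
  shows "ujoin A x y \<in> V \<and> rk A V (ujoin A x y) = max (rk A V x) (rk A V y)"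
proof (cases "ul_le A x y")
  case True
  then have "ujoin A x y = y" using join1[OF ch, of x y] xy V by blast
  moreover have "rk A V x \<le> rk A V y" using True rk_le_iff[OF ch V xy] by simp
  ultimately show ?thesis using xy by simp
next
  case False
  then have yx: "ul_le A y x" using le_total[OF ch] xy V by blast
  then have "ujoin A x y = x" using join2[OF ch, of x y] xy V by blast
  moreover have "rk A V y \<le> rk A V x" using yx rk_le_iff[OF ch V xy(2,1)] by simp
  ultimately show ?thesis using xy by simp
qed

lemma cond_tr:
  assumes ch: "ul_chain A" and V: "finite V" "V \<subseteq> ucar A" and xyz: "x \<in> V" "y \<in> V" "z \<in> V"
  shows "ul_le A (uone A) (uimp A (umeet A x y) z) \<longleftrightarrow> min (rk A V x) (rk A V y) \<le> rk A V z"
proof -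
  have m: "umeet A x y \<in> V" using rk_meet[OF ch V xyz(1,2)] by blast
  have "ul_le A (uone A) (uimp A (umeet A x y) z) \<longleftrightarrow> ul_le A (umeet A x y) z"
    using imp_iff[OF ch] m xyz V by blast
  also have "\<dots> \<longleftrightarrow> rk A V (umeet A x y) \<le> rk A V z" using rk_le_iff[OF ch V m xyz(3)] .
  finally show ?thesis using rk_meet[OF ch V xyz(1,2)] by simp
qed

lemma cond_tot:
  assumes ch: "ul_chain A" and V: "finite V" "V \<subseteq> ucar A" "uone A \<in> V" and xy: "x \<in> V" "y \<in> V"
  shows "ul_le A (uone A) (ujoin A x y) \<longleftrightarrow> rk A V (uone A) \<le> rk A V x \<or> rk A V (uone A) \<le> rk A V y"
proof -
  have m: "ujoin A x y \<in> V" using rk_join[OF ch V(1,2) xy] by blast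
  have "ul_le A (uone A) (ujoin A x y) \<longleftrightarrow> rk A V (uone A) \<le> rk A V (ujoin A x y)"
    using rk_le_iff[OF ch V(1,2) V(3) m] .
  then show ?thesis using rk_join[OF ch V(1,2) xy] by auto
qed

lemma K2_good:
  assumes ch: "ul_chain A" and V: "finite V" "V \<subseteq> ucar A" "uone A \<in> V"
    and vals: "\<And>x y. x \<in> fst S \<Longrightarrow> y \<in> fst S \<Longrightarrow> snd S x y \<in> V"
  shows "S \<in> K2 A \<longleftrightarrow> finite (fst S) \<and> good (rk A V (uone A)) (fst S) (\<lambda>x y. rk A V (snd S x y))"
proof -
  have ia: "is_astr A S" unfolding is_astr_def using vals V by blast
  have c1: "ul_le A (uone A) (snd S a a) \<longleftrightarrow> rk A V (uone A) \<le> rk A V (snd S a a)" if "a \<in> fst S" for a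
    using rk_le_iff[OF ch V(1,2) V(3) vals[OF that that]] .
  have c2: "ul_le A (uone A) (uimp A (umeet A (snd S a b) (snd S b c)) (snd S a c)) \<longleftrightarrow>
     min (rk A V (snd S a b)) (rk A V (snd S b c)) \<le> rk A V (snd S a c)"
    if "a \<in> fst S" "b \<in> fst S" "c \<in> fst S" for a b c
    using cond_tr[OF ch V(1,2)] vals that by blast
  have c3: "ul_le A (uone A) (ujoin A (snd S a b) (snd S b a)) \<longleftrightarrow>
     rk A V (uone A) \<le> rk A V (snd S a b) \<or> rk A V (uone A) \<le> rk A V (snd S b a)"
    if "a \<in> fst S" "b \<in> fst S" for a b
    using cond_tot[OF ch V] vals that by blast
  have "S \<in> K2 A \<longleftrightarrow> finite (fst S) \<and> (\<forall>a\<in>fst S. \<forall>b\<in>fst S. \<forall>c\<in>fst S.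
      rk A V (uone A) \<le> rk A V (snd S a a) \<and>
      min (rk A V (snd S a b)) (rk A V (snd S b c)) \<le> rk A V (snd S a c) \<and>
      (rk A V (uone A) \<le> rk A V (snd S a b) \<or> rk A V (uone A) \<le> rk A V (snd S b a)))"
    unfolding K2_def using ia by (simp add: c1 c2 c3)
  also have "\<dots> \<longleftrightarrow> finite (fst S) \<and> good (rk A V (uone A)) (fst S) (\<lambda>x y. rk A V (snd S x y))"
    unfolding good_def by blast
  finally show ?thesis .
qed



lemma good_cong: "(\<And>x y. x \<in> M \<Longrightarrow> y \<in> M \<Longrightarrow> R x y = R' x y) \<Longrightarrow> good u M R \<longleftrightarrow> good u M R'"
  unfolding good_def by simp

lemma good_image: "good u M R \<Longrightarrow> (\<And>x y. x \<in> M \<Longrightarrow> y \<in> M \<Longrightarrow> R' (f x) (f y) = R x y) \<Longrightarrow> good u (f ` M) R'"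
  unfolding good_def by auto

lemma iso_emb: "isomorphism f M N \<Longrightarrow> embedding f M N" unfolding isomorphism_def by blast

lemma emb_comp: "embedding f M N \<Longrightarrow> embedding g N P \<Longrightarrow> embedding (g \<circ> f) M P"
  unfolding embedding_def by (auto intro: comp_inj_on simp: inj_on_subset image_subset_iff)
  
lemma emb_comp': "embedding f M N \<Longrightarrow> embedding g N P \<Longrightarrow> embedding (\<lambda>x. g (f x)) M P"
  using emb_comp[of f M N g P] by (simp add: comp_def)

lemma iso_comp: "isomorphism f M N \<Longrightarrow> isomorphism g N P \<Longrightarrow> isomorphism (g \<circ> f) M P"
  unfolding isomorphism_def using emb_comp by (metis image_comp)

lemma iso_inv: assumes "isomorphism f M N" shows "isomorphism (inv_into (fst M) f) N M"
proof -
  have e: "f ` fst M = fst N" "inj_on f (fst M)" "\<forall>x\<in>fst M. \<forall>y\<in>fst M. snd N (f x) (f y) = snd M x y"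
    using assms unfolding isomorphism_def embedding_def by auto
  have "bij_betw f (fst M) (fst N)" using e unfolding bij_betw_def by simp
  then have b: "bij_betw (inv_into (fst M) f) (fst N) (fst M)" by (rule bij_betw_inv_into)
  have "snd M (inv_into (fst M) f x) (inv_into (fst M) f y) = snd N x y" if "x \<in> fst N" "y \<in> fst N" for x y
  proof -
    have "x = f (inv_into (fst M) f x)" "y = f (inv_into (fst M) f y)" using that e by (auto simp: f_inv_into_f)
    moreover have "inv_into (fst M) f x \<in> fst M" "inv_into (fst M) f y \<in> fst M"
      using that e by (auto intro: inv_into_into)
    ultimately show ?thesis using e(3) by metis
  qed
  then show ?thesis using b unfolding isomorphism_def embedding_def bij_betw_def by auto
qed

lemma isomorphic_sym: "isomorphic M N \<Longrightarrow> isomorphic N M"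
  unfolding isomorphic_def using iso_inv by blast
lemma isomorphic_trans: "isomorphic M N \<Longrightarrow> isomorphic N P \<Longrightarrow> isomorphic M P"
  unfolding isomorphic_def using iso_comp by blast

lemma K2_iso: assumes "M \<in> K2 A" "isomorphism f M N" shows "N \<in> K2 A"
proof -
  have e: "f ` fst M = fst N" "\<forall>x\<in>fst M. \<forall>y\<in>fst M. snd N (f x) (f y) = snd M x y"
    using assms(2) unfolding isomorphism_def embedding_def by auto
  have fin: "finite (fst M)" and ia: "is_astr A M" and
    P: "\<forall>a\<in>fst M. \<forall>b\<in>fst M. \<forall>c\<in>fst M.
        ul_le A (uone A) (snd M a a) \<and>
        ul_le A (uone A) (uimp A (umeet A (snd M a b) (snd M b c)) (snd M a c)) \<and>
        ul_le A (uone A) (ujoin A (snd M a b) (snd M b a))"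
    using assms(1) unfolding K2_def by auto
  have "finite (fst N)" using fin e(1) by (metis finite_imageI)
  moreover have "is_astr A N" using ia e(2) unfolding is_astr_def e(1)[symmetric] by auto
  moreover have "\<forall>a\<in>fst N. \<forall>b\<in>fst N. \<forall>c\<in>fst N.
        ul_le A (uone A) (snd N a a) \<and>
        ul_le A (uone A) (uimp A (umeet A (snd N a b) (snd N b c)) (snd N a c)) \<and>
        ul_le A (uone A) (ujoin A (snd N a b) (snd N b a))"
    using P e(2) unfolding e(1)[symmetric] by auto
  ultimately show ?thesis unfolding K2_def by blast
qed

lemma K2_isomorphic: "M \<in> K2 A \<Longrightarrow> isomorphic M N \<Longrightarrow> N \<in> K2 A"
  unfolding isomorphic_def using K2_iso by blast

lemma K2_sub: assumes "M \<in> K2 A" "substr N M" shows "N \<in> K2 A"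
proof -
  have e: "fst N \<subseteq> fst M" "\<forall>x\<in>fst N. \<forall>y\<in>fst N. snd N x y = snd M x y"
    using assms(2) unfolding substr_def by auto
  have fin: "finite (fst M)" and ia: "is_astr A M" and
    P: "\<forall>a\<in>fst M. \<forall>b\<in>fst M. \<forall>c\<in>fst M.
        ul_le A (uone A) (snd M a a) \<and>
        ul_le A (uone A) (uimp A (umeet A (snd M a b) (snd M b c)) (snd M a c)) \<and>
        ul_le A (uone A) (ujoin A (snd M a b) (snd M b a))"
    using assms(1) unfolding K2_def by auto
  have "finite (fst N)" using fin e(1) by (rule finite_subset[rotated])
  moreover have "is_astr A N" using ia e unfolding is_astr_def by auto
  moreover have "\<forall>a\<in>fst N. \<forall>b\<in>fst N. \<forall>c\<in>fst N.
        ul_le A (uone A) (snd N a a) \<and>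
        ul_le A (uone A) (uimp A (umeet A (snd N a b) (snd N b c)) (snd N a c)) \<and>
        ul_le A (uone A) (ujoin A (snd N a b) (snd N b a))"
  proof (intro ballI)
    fix a b c assume abc: "a \<in> fst N" "b \<in> fst N" "c \<in> fst N"
    then have "a \<in> fst M" "b \<in> fst M" "c \<in> fst M" using e(1) by auto
    then show "ul_le A (uone A) (snd N a a) \<and>
        ul_le A (uone A) (uimp A (umeet A (snd N a b) (snd N b c)) (snd N a c)) \<and>
        ul_le A (uone A) (ujoin A (snd N a b) (snd N b a))"
      using P e(2) abc by simp
  qed
  ultimately show ?thesis unfolding K2_def by blast
qed

definition canon :: "('a, 'm) ul_alg_scheme \<Rightarrow> (nat \<Rightarrow> 'b) \<Rightarrow> ('b, 'a) astr set" where
  "canon A e = {N. N \<in> K2 A \<and> (\<exists>n. fst N = e ` {..<n}) \<and>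
     (\<forall>x y. \<not> (x \<in> fst N \<and> y \<in> fst N) \<longrightarrow> snd N x y = ubot A)}"

lemma canon_K2: "canon A e \<subseteq> K2 A" unfolding canon_def by auto

lemma canon_countable:
  assumes "countable (ucar A)" "inj e"
  shows "countable (canon A e)"
proof -
  define dec where "dec = (\<lambda>(n::nat, L::'a list list). (e ` {..<n},
     \<lambda>x y. if x \<in> e ` {..<n} \<and> y \<in> e ` {..<n} then L ! inv e x ! inv e y else ubot A))"
  have "canon A e \<subseteq> dec ` (UNIV \<times> lists (lists (ucar A)))"
  proof
    fix N assume N: "N \<in> canon A e"
    then obtain n where n: "fst N = e ` {..<n}" unfolding canon_def by auto
    have out: "\<And>x y. \<not> (x \<in> fst N \<and> y \<in> fst N) \<Longrightarrow> snd N x y = ubot A" using N unfolding canon_def by auto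
    have ia: "\<And>x y. x \<in> fst N \<Longrightarrow> y \<in> fst N \<Longrightarrow> snd N x y \<in> ucar A"
      using N unfolding canon_def K2_def is_astr_def by auto
    define L where "L = map (\<lambda>i. map (\<lambda>j. snd N (e i) (e j)) [0..<n]) [0..<n]"
    have "L \<in> lists (lists (ucar A))" unfolding L_def using ia n by auto
    moreover have "dec (n, L) = N"
    proof -
      have "snd N x y = (if x \<in> e ` {..<n} \<and> y \<in> e ` {..<n} then L ! inv e x ! inv e y else ubot A)" for x y
      proof (cases "x \<in> e ` {..<n} \<and> y \<in> e ` {..<n}")
        case True
        then obtain i j where ij: "i < n" "j < n" "x = e i" "y = e j" by auto
        then show ?thesis using True assms(2) unfolding L_def by simp
      next
        case False then show ?thesis using out n by auto
      qed
      then have sn: "snd N = (\<lambda>x y. if x \<in> e ` {..<n} \<and> y \<in> e ` {..<n} then L ! inv e x ! inv e y else ubot A)"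
        by (intro ext) simp
      show ?thesis unfolding dec_def using n sn by (simp add: prod_eq_iff)
    qed
    ultimately show "N \<in> dec ` (UNIV \<times> lists (lists (ucar A)))" by force
  qed
  moreover have "countable (dec ` (UNIV \<times> lists (lists (ucar A))))"
    using assms(1) by auto
  ultimately show ?thesis by (rule countable_subset)
qed

lemma canon_exists:
  assumes "M \<in> K2 A" "inj e"
  shows "\<exists>N\<in>canon A e. isomorphic M N"
proof -
  have fin: "finite (fst M)" using assms unfolding K2_def by auto
  obtain h where h: "bij_betw h (fst M) {0..<card (fst M)}" using ex_bij_betw_finite_nat[OF fin] by blast
  define n where "n = card (fst M)"
  define k where "k = e \<circ> h"
  have bk: "bij_betw k (fst M) (e ` {..<n})" unfolding k_def n_def
    using h assms(2) by (metis atLeast0LessThan bij_betw_comp_iff bij_betw_subset inj_on_imp_bij_betw subset_UNIV)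
  define U where "U = e ` {..<n}"
  define N where "N = (U, \<lambda>x y. if x \<in> U \<and> y \<in> U then snd M (inv_into (fst M) k x) (inv_into (fst M) k y) else ubot A)"
  have iso: "isomorphism k M N"
    unfolding isomorphism_def embedding_def N_def using bk unfolding U_def bij_betw_def
    by (auto simp: inv_into_f_f)
  then have "N \<in> K2 A" using K2_iso assms(1) by blast
  then have "N \<in> canon A e" unfolding canon_def N_def U_def by auto
  then show ?thesis using iso unfolding isomorphic_def by blast
qed



lemma amalg_W:
  fixes M0 M1 M2 :: "('b, 'a) astr" and A :: "('a, 'm) ul_alg_scheme"
  assumes ch: "ul_chain A" and K1: "M1 \<in> K2 A" and K2': "M2 \<in> K2 A"
    and s1: "substr M0 M1" and s2: "substr M0 M2"
  shows "\<exists>W :: ('b + 'b, 'a) astr. W \<in> K2 A \<and> embedding Inl M1 W \<and>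
     embedding (\<lambda>y. if y \<in> fst M0 then Inl y else Inr y) M2 W"
proof -
  obtain X1 R1 where M1: "M1 = (X1, R1)" by (cases M1)
  obtain X2 R2 where M2: "M2 = (X2, R2)" by (cases M2)
  obtain X0 R0 where M0: "M0 = (X0, R0)" by (cases M0)
  have X01: "X0 \<subseteq> X1" and X02: "X0 \<subseteq> X2" using s1 s2 M0 M1 M2 unfolding substr_def by auto
  have agree: "R1 x y = R2 x y" if "x \<in> X0" "y \<in> X0" for x y
    using s1 s2 M0 M1 M2 that unfolding substr_def by auto
  have fin1: "finite X1" and fin2: "finite X2" using K1 K2' M1 M2 unfolding K2_def by auto
  have ia1: "R1 x y \<in> ucar A" if "x \<in> X1" "y \<in> X1" for x y
    using K1 M1 that unfolding K2_def is_astr_def by auto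
  have ia2: "R2 x y \<in> ucar A" if "x \<in> X2" "y \<in> X2" for x y
    using K2' M2 that unfolding K2_def is_astr_def by auto
  define g2 :: "'b \<Rightarrow> 'b + 'b" where "g2 = (\<lambda>y. if y \<in> X0 then Inl y else Inr y)"
  define unS :: "'b + 'b \<Rightarrow> 'b" where "unS = case_sum id id"
  define U1 :: "('b + 'b) set" where "U1 = Inl ` X1"
  define U2 where "U2 = g2 ` X2"
  define ra where "ra = (\<lambda>(u::'b + 'b) (v::'b + 'b). if u \<in> U1 \<and> v \<in> U1 then R1 (unS u) (unS v) else R2 (unS u) (unS v))"
  have unS1: "unS (Inl x) = x" for x unfolding unS_def by simp
  have unS2: "unS (g2 x) = x" for x unfolding unS_def g2_def by simp
  have ra1: "ra (Inl x) (Inl y) = R1 x y" if "x \<in> X1" "y \<in> X1" for x y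
    unfolding ra_def U1_def using that unS1 by auto
  have g2U1: "x \<in> X0" if "g2 x \<in> U1" for x
    using that unfolding g2_def U1_def by (auto split: if_splits)
  have ra2: "ra (g2 x) (g2 y) = R2 x y" if "x \<in> X2" "y \<in> X2" for x y
  proof (cases "g2 x \<in> U1 \<and> g2 y \<in> U1")
    case True
    then have "x \<in> X0" "y \<in> X0" using g2U1 by auto
    then show ?thesis unfolding ra_def using True unS2 agree by simp
  next
    case False then show ?thesis unfolding ra_def using unS2 by (simp only: if_False unS2)
  qed
  define V where "V = (\<lambda>(x, y). R1 x y) ` (X1 \<times> X1) \<union> (\<lambda>(x, y). R2 x y) ` (X2 \<times> X2) \<union> {uone A, ubot A}"
  have finV: "finite V" unfolding V_def using fin1 fin2 by auto
  have VC: "V \<subseteq> ucar A" unfolding V_def using ia1 ia2 cl0[OF ch] by auto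
  have oneV: "uone A \<in> V" and botV: "ubot A \<in> V" unfolding V_def by auto
  have v1: "R1 x y \<in> V" if "x \<in> X1" "y \<in> X1" for x y unfolding V_def using that by force
  have v2: "R2 x y \<in> V" if "x \<in> X2" "y \<in> X2" for x y unfolding V_def using that by force
  define u where "u = rk A V (uone A)"
  define r where "r = (\<lambda>x y. rk A V (ra x y))"
  have gd1: "good u X1 (\<lambda>x y. rk A V (R1 x y))"
    using K2_good[OF ch finV VC oneV, of M1] K1 M1 v1 unfolding u_def by auto
  have gd2: "good u X2 (\<lambda>x y. rk A V (R2 x y))"
    using K2_good[OF ch finV VC oneV, of M2] K2' M2 v2 unfolding u_def by auto
  have gU1: "good u U1 r" unfolding U1_def
    by (rule good_image[OF gd1]) (simp add: r_def ra1)
  have gU2: "good u U2 r" unfolding U2_def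
    by (rule good_image[OF gd2]) (simp add: r_def ra2)
  have finU1: "finite U1" and finU2: "finite U2" unfolding U1_def U2_def using fin1 fin2 by auto
  obtain T where T: "good u (U1 \<union> U2) T" "\<forall>x\<in>U1. \<forall>y\<in>U1. T x y = r x y"
    "\<forall>x\<in>U2. \<forall>y\<in>U2. T x y = r x y"
    "\<forall>x\<in>U1 \<union> U2. \<forall>y\<in>U1 \<union> U2.
       T x y \<in> {r v w | v w. (v \<in> U1 \<and> w \<in> U1) \<or> (v \<in> U2 \<and> w \<in> U2)} \<union> {0, u}"
    using core_amalg[OF finU1 finU2 gU1 gU2] by blast
  have raV: "ra v w \<in> V" if "(v \<in> U1 \<and> w \<in> U1) \<or> (v \<in> U2 \<and> w \<in> U2)" for v w
    using that ra1 ra2 v1 v2 unfolding U1_def U2_def by auto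
  have TV: "T x y \<in> rk A V ` V" if "x \<in> U1 \<union> U2" "y \<in> U1 \<union> U2" for x y
  proof -
    have "T x y \<in> {r v w | v w. (v \<in> U1 \<and> w \<in> U1) \<or> (v \<in> U2 \<and> w \<in> U2)} \<union> {0, u}"
      using T(4) that by blast
    moreover have "0 \<in> rk A V ` V" using rk_bot[OF ch VC] botV by force
    moreover have "u \<in> rk A V ` V" unfolding u_def using oneV by blast
    moreover have "r v w \<in> rk A V ` V" if "(v \<in> U1 \<and> w \<in> U1) \<or> (v \<in> U2 \<and> w \<in> U2)" for v w
      unfolding r_def using raV[OF that] by blast
    moreover have "(\<exists>v w. T x y = r v w \<and> ((v \<in> U1 \<and> w \<in> U1) \<or> (v \<in> U2 \<and> w \<in> U2))) \<or> T x y = 0 \<or> T x y = u"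
      using calculation(1) by blast
    ultimately show ?thesis by metis
  qed
  have inj: "inj_on (rk A V) V" using rk_inj[OF ch finV VC] .
  define Ta where "Ta = (\<lambda>x y. inv_into V (rk A V) (T x y))"
  have TaV: "Ta x y \<in> V" "rk A V (Ta x y) = T x y" if "x \<in> U1 \<union> U2" "y \<in> U1 \<union> U2" for x y
    unfolding Ta_def using TV[OF that] by (auto intro: inv_into_into f_inv_into_f)
  define W where "W = (U1 \<union> U2, Ta)"
  have "W \<in> K2 A"
  proof -
    have "good u (U1 \<union> U2) (\<lambda>x y. rk A V (Ta x y))"
      using T(1) good_cong[of "U1 \<union> U2" "\<lambda>x y. rk A V (Ta x y)" T u] TaV(2) by blast
    then show ?thesis using K2_good[OF ch finV VC oneV, of W] TaV(1) finU1 finU2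
      unfolding W_def u_def by auto
  qed
  moreover have "embedding Inl M1 W"
  proof -
    have "Ta (Inl x) (Inl y) = R1 x y" if "x \<in> X1" "y \<in> X1" for x y
    proof -
      have "Inl x \<in> U1" "Inl y \<in> U1" unfolding U1_def using that by auto
      then have "T (Inl x) (Inl y) = rk A V (R1 x y)" using T(2) ra1[OF that] unfolding r_def by auto
      then show ?thesis unfolding Ta_def using inv_into_f_f[OF inj v1[OF that]] by simp
    qed
    then show ?thesis unfolding embedding_def W_def M1 U1_def by auto
  qed
  moreover have "embedding g2 M2 W"
  proof -
    have "Ta (g2 x) (g2 y) = R2 x y" if "x \<in> X2" "y \<in> X2" for x y
    proof -
      have "g2 x \<in> U2" "g2 y \<in> U2" unfolding U2_def using that by auto
      then have "T (g2 x) (g2 y) = rk A V (R2 x y)" using T(3) ra2[OF that] unfolding r_def by auto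
      then show ?thesis unfolding Ta_def using inv_into_f_f[OF inj v2[OF that]] by simp
    qed
    moreover have "inj_on g2 X2" unfolding g2_def inj_on_def by auto
    ultimately show ?thesis unfolding embedding_def W_def M2 U2_def by auto
  qed
  ultimately show ?thesis unfolding g2_def M0 fst_conv by blast
qed


theorem proposition3:
  fixes A :: "'a ul_alg"
  assumes "ul_chain A"
    and "countable (ucar A)"
    and "infinite (UNIV :: 'b set)"
  shows "\<exists>S :: ('b, 'a) astr set. iso_reps (K2 A) S \<and> fraisse_class S"
proof -
  note ch = assms(1)
  obtain e :: "nat \<Rightarrow> 'b" where e: "inj e" using infinite_countable_subset[OF assms(3)] by blast
  define rep :: "('b, 'a) astr \<Rightarrow> ('b, 'a) astr" where
    "rep = (\<lambda>M. SOME N. N \<in> canon A e \<and> isomorphic M N)"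
  define S where "S = rep ` K2 A"
  have rep: "rep M \<in> canon A e \<and> isomorphic M (rep M)" if "M \<in> K2 A" for M
  proof -
    have "\<exists>N. N \<in> canon A e \<and> isomorphic M N" using canon_exists[OF that e] by blast
    then show ?thesis unfolding rep_def by (rule someI_ex)
  qed
  have SC: "S \<subseteq> canon A e" unfolding S_def using rep by blast
  have SK: "S \<subseteq> K2 A" using SC canon_K2 by blast
  have clos: "M \<in> K2 A" if hM: "M \<in> iso_closure S" for M
  proof -
    obtain N where "N \<in> S" "isomorphic M N" using hM unfolding iso_closure_def by blast
    then show ?thesis using SK K2_isomorphic isomorphic_sym by blast
  qed
  have inclos: "M \<in> iso_closure S" if "M \<in> K2 A" for M
    unfolding iso_closure_def S_def using rep[OF that] that by blast
  have intoS: "\<exists>M3\<in>S. \<exists>h. embedding h W M3" if hW: "W \<in> K2 A" for W :: "('b + 'b, 'a) astr"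
  proof -
    obtain N where N: "N \<in> canon A e" "isomorphic W N" using canon_exists[OF hW e] by blast
    then have NK: "N \<in> K2 A" using canon_K2 by blast
    obtain k where k: "isomorphism k W N" using N unfolding isomorphic_def by blast
    obtain k' where k': "isomorphism k' N (rep N)" using rep[OF NK] unfolding isomorphic_def by blast
    have "embedding (k' \<circ> k) W (rep N)" using emb_comp[OF iso_emb[OF k] iso_emb[OF k']] .
    moreover have "rep N \<in> S" unfolding S_def using NK by blast
    ultimately show ?thesis by blast
  qed
  have amal: "\<exists>M3\<in>S. \<exists>f1 f2. embedding f1 M1 M3 \<and> embedding f2 M2 M3 \<and> (\<forall>x\<in>fst M0. f1 x = f2 x)"
    if hyp: "M1 \<in> K2 A" "M2 \<in> K2 A" "substr M0 M1" "substr M0 M2" for M0 M1 M2 :: "('b, 'a) astr"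
  proof -
    obtain W :: "('b + 'b, 'a) astr" where W: "W \<in> K2 A" "embedding Inl M1 W"
      "embedding (\<lambda>y. if y \<in> fst M0 then Inl y else Inr y) M2 W"
      using amalg_W[OF ch hyp] by blast
    obtain M3 h where M3: "M3 \<in> S" "embedding h W M3" using intoS[OF W(1)] by blast
    have "embedding (h \<circ> Inl) M1 M3" using emb_comp[OF W(2) M3(2)] .
    moreover have "embedding (h \<circ> (\<lambda>y. if y \<in> fst M0 then Inl y else Inr y)) M2 M3"
      using emb_comp[OF W(3) M3(2)] .
    moreover have "\<forall>x\<in>fst M0. (h \<circ> Inl) x = (h \<circ> (\<lambda>y. if y \<in> fst M0 then Inl y else Inr y)) x"
      by simp
    ultimately show ?thesis using M3(1) by blast
  qed
  have "iso_reps (K2 A) S"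
  proof -
    have "\<forall>M\<in>(K2 A :: ('b, 'a) astr set). \<exists>N\<in>S. isomorphic M N"
    proof
      fix M :: "('b, 'a) astr" assume hM: "M \<in> K2 A"
      then have "rep M \<in> S" unfolding S_def by blast
      then show "\<exists>N\<in>S. isomorphic M N" using rep[OF hM] by blast
    qed
    moreover have "N1 = N2" if hN: "N1 \<in> S" "N2 \<in> S" "isomorphic N1 N2" for N1 N2
    proof -
      obtain M1 M2 where M: "M1 \<in> K2 A" "M2 \<in> K2 A" "N1 = rep M1" "N2 = rep M2"
        using hN(1,2) unfolding S_def by blast
      have "isomorphic M1 M2"
        using rep[OF M(1)] rep[OF M(2)] M(3,4) hN(3) isomorphic_trans isomorphic_sym by metis
      then have "(\<lambda>N. N \<in> canon A e \<and> isomorphic M1 N) = (\<lambda>N. N \<in> canon A e \<and> isomorphic M2 N)"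
        using isomorphic_trans isomorphic_sym by blast
      then show ?thesis using M(3,4) unfolding rep_def by simp
    qed
    ultimately show ?thesis unfolding iso_reps_def using SK by blast
  qed
  moreover have "fraisse_class S"
  proof -
    have "countable S" using countable_subset[OF SC canon_countable[OF assms(2) e]] .
    moreover have "\<forall>M\<in>S. finite (fst M)" using SK unfolding K2_def by blast
    moreover have "hereditary S" unfolding hereditary_def using clos inclos K2_sub by blast
    moreover have "jep S" unfolding jep_def
    proof (intro ballI)
      fix M1 M2 assume "M1 \<in> iso_closure S" "M2 \<in> iso_closure S"
      then have K: "M1 \<in> K2 A" "M2 \<in> K2 A" using clos by auto
      have "substr ({}, \<lambda>_ _. ubot A) M1" "substr ({}, \<lambda>_ _. ubot A) M2" unfolding substr_def by auto
      then show "\<exists>M3\<in>S. \<exists>f1 f2. embedding f1 M1 M3 \<and> embedding f2 M2 M3" using amal[OF K] by blast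
    qed
    moreover have "amalgamation S" unfolding amalgamation_def
      using amal clos by blast
    ultimately show ?thesis unfolding fraisse_class_def by blast
  qed
  ultimately show ?thesis by blast
qed

end
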